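(* For every $d\ge 2$ there is a family $\mathcal{F}$ of $2^d+d$ hyperplanes in $\mathbb{R}^d$ in general position that is not in convex position. Specifically, such a family can be obtained by taking hyperplanes $h_1,\ldots,h_d$ sufficiently close to the coordinate hyperplanes $\{x_i=0\}$ and, for each $\delta=(\delta_1,\ldots,\delta_d)\in\{1,-1\}^d$, a hyperplane $h_\delta$ sufficiently close to $\{x:\sum_{i=1}^d\delta_ix_i=1\}$, chosen so that the family is in general position.
   Context: A set of $n\ge d$ hyperplanes in $\mathbb{R}^d$ is in general position if every $d$ of them intersect in a single point and these $\binom nd$ points are pairwise distinct. A set $\{U_1,\ldots,U_n\}$ of hyperplanes is in convex position if there is a $d$-dimensional convex polytope $P\subset\mathbb{R}^d$ such that $U_i\cap P$ is a $(d-1)$-dimensional face (facet) of $P$ for every $i$. *)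

theory Defs
  imports "HOL-Analysis.Analysis"
begin

definition is_hyperplane :: "(real^'n) set \<Rightarrow> bool" where
  "is_hyperplane U \<longleftrightarrow> (\<exists>a b. a \<noteq> 0 \<and> U = {x. a \<bullet> x = b})"

definition general_position :: "(real^'n) set set \<Rightarrow> bool" where
  "general_position H \<longleftrightarrow>
     finite H \<and> card H \<ge> CARD('n) \<and> (\<forall>U\<in>H. is_hyperplane U) \<and>
     (\<forall>S. S \<subseteq> H \<and> card S = CARD('n) \<longrightarrow> (\<exists>!p. p \<in> \<Inter>S)) \<and>
     (\<forall>S T. S \<subseteq> H \<and> card S = CARD('n) \<and> T \<subseteq> H \<and> card T = CARD('n) \<and> S \<noteq> T
            \<longrightarrow> \<Inter>S \<noteq> \<Inter>T)"

definition convex_position :: "(real^'n) set set \<Rightarrow> bool" where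
  "convex_position H \<longleftrightarrow>
     (\<exists>P. polytope P \<and> aff_dim P = int CARD('n) \<and> (\<forall>U\<in>H. (U \<inter> P) facet_of P))"

definition sign_vectors :: "(real^'n) set" where
  "sign_vectors = {\<delta>. \<forall>i. \<delta> $ i = 1 \<or> \<delta> $ i = -1}"

end

theory Submission
  imports Defs
begin


lemma hyp_prop:
  fixes a c :: "real^'n"
  assumes "a \<noteq> 0" "{x. a \<bullet> x = b} = {x. c \<bullet> x = e}"
  shows "c = ((c \<bullet> a)/(a \<bullet> a)) *\<^sub>R a \<and> e = ((c \<bullet> a)/(a \<bullet> a)) * b"
proof -
  define k where "k = (c \<bullet> a)/(a \<bullet> a)"
  have aa: "a \<bullet> a \<noteq> 0" using assms(1) by simp
  have key: "c \<bullet> x + ((b - a \<bullet> x)/(a \<bullet> a)) * (c \<bullet> a) = e" for x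
  proof -
    define y where "y = x + ((b - a \<bullet> x)/(a \<bullet> a)) *\<^sub>R a"
    have "a \<bullet> y = b" using aa by (simp add: y_def inner_add_right field_simps)
    then have "c \<bullet> y = e" using assms(2) by blast
    then show ?thesis by (simp add: y_def inner_add_right inner_commute)
  qed
  have e: "e = k * b" using key[of 0] by (simp add: k_def field_simps)
  have "(c - k *\<^sub>R a) \<bullet> x = 0" for x
  proof -
    have h: "c \<bullet> x + ((b - a \<bullet> x)/(a \<bullet> a)) * (c \<bullet> a) = k * b" using key[of x] e by simp
    have "((b - a \<bullet> x)/(a \<bullet> a)) * (c \<bullet> a) = k * b - k * (a \<bullet> x)"
      using aa by (simp add: k_def divide_simps) (simp add: algebra_simps)
    then have "c \<bullet> x = k * (a \<bullet> x)" using h by linarith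
    then show ?thesis by (simp add: inner_diff_left)
  qed
  then have "(c - k *\<^sub>R a) \<bullet> (c - k *\<^sub>R a) = 0" by blast
  then have "c - k *\<^sub>R a = 0" by (meson inner_eq_zero_iff)
  then have "c = k *\<^sub>R a" by (rule right_minus_eq[THEN iffD1])
  with e show ?thesis unfolding k_def[symmetric] by blast
qed

lemma side:
  fixes a :: "real^'n"
  assumes "convex P" "({x. a \<bullet> x = b} \<inter> P) face_of P"
  shows "(\<forall>x\<in>P. a \<bullet> x \<le> b) \<or> (\<forall>x\<in>P. a \<bullet> x \<ge> b)"
proof (rule ccontr)
  assume "\<not> ?thesis"
  then obtain p q where pq: "p \<in> P" "q \<in> P" "a \<bullet> p > b" "a \<bullet> q < b" by force
  define t where "t = (b - a \<bullet> q)/(a \<bullet> p - a \<bullet> q)"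
  have t: "0 < t" "t < 1" using pq by (auto simp: t_def field_simps)
  define m where "m = (1 - t) *\<^sub>R q + t *\<^sub>R p"
  have "t * (a \<bullet> p - a \<bullet> q) = b - a \<bullet> q" using pq by (simp add: t_def)
  then have am: "a \<bullet> m = b" by (simp add: m_def inner_add_right algebra_simps)
  have mP: "m \<in> P" using assms(1) pq t by (simp add: m_def convexD)
  have "q \<noteq> p" using pq by auto
  then have "m \<in> open_segment q p" using t by (auto simp: in_segment m_def)
  from face_ofD[OF assms(2) this pq(2) pq(1)] am mP have "q \<in> {x. a \<bullet> x = b}" by auto
  with pq show False by auto
qed



lemma interior_Union_closed_empty:
  fixes F :: "'a::topological_space set set"
  assumes "finite F" "\<forall>S\<in>F. closed S \<and> interior S = {}"
  shows "interior (\<Union>F) = {}"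
  using assms
proof (induction F rule: finite_induct)
  case empty then show ?case by simp
next
  case (insert S F)
  then have "interior (S \<union> \<Union>F) = interior S"
    by (intro interior_closed_Un_empty_interior) auto
  with insert show ?case by simp
qed

lemma avoid_subspaces:
  fixes c :: "real^'n" and F :: "(real^'n) set set"
  assumes "finite F" "\<forall>X\<in>F. dim X < CARD('n)" "e > 0"
  shows "\<exists>a. dist a c < e \<and> (\<forall>X\<in>F. a \<notin> span X)"
proof (rule ccontr)
  assume "\<not> ?thesis"
  then have sub: "ball c e \<subseteq> \<Union>(span ` F)" by (auto simp: dist_commute)
  have "interior (\<Union>(span ` F)) = {}"
  proof (rule interior_Union_closed_empty)
    show "finite (span ` F)" using assms(1) by simp
    show "\<forall>S\<in>span ` F. closed S \<and> interior S = {}"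
      using assms(2) by (auto intro!: empty_interior_lowdim)
  qed
  moreover have "ball c e \<subseteq> interior (\<Union>(span ` F))"
    using sub by (intro interior_maximal) auto
  ultimately show False using assms(3) by (metis centre_in_ball empty_iff subsetD)
qed

lemma avoid_finite_real:
  fixes X :: "real set"
  assumes "finite X" "e > 0"
  shows "\<exists>x. \<bar>x - c\<bar> < e \<and> x \<notin> X"
proof -
  have "infinite {c - e<..<c + e}" using assms(2) by (intro infinite_Ioo) auto
  then have "\<not> {c - e<..<c + e} \<subseteq> X" using assms(1) finite_subset by blast
  then show ?thesis by (auto simp: abs_less_iff)
qed

lemma solve:
  fixes a :: "'k \<Rightarrow> real^'n"
  assumes fin: "finite S" and cS: "card S = CARD('n)" and inj: "inj_on a S"
    and ind: "independent (a ` S)"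
  shows "\<exists>!p. \<forall>k\<in>S. a k \<bullet> p = b k"
proof -
  have sp: "UNIV \<subseteq> span (a ` S)"
    using ind inj cS by (intro card_ge_dim_independent) (auto simp: card_image)
  have z: "v = 0" if "\<forall>k\<in>S. a k \<bullet> v = 0" for v
  proof -
    have "orthogonal v y" if "y \<in> span (a ` S)" for y
      by (rule orthogonal_to_span[OF that]) (use \<open>\<forall>k\<in>S. a k \<bullet> v = 0\<close> in \<open>auto simp: orthogonal_def inner_commute\<close>)
    then have "orthogonal v v" using sp by auto
    then show ?thesis by (simp add: orthogonal_def)
  qed
  have "\<exists>z. a k \<bullet> z = 1 \<and> (\<forall>j\<in>S - {k}. a j \<bullet> z = 0)" if kS: "k \<in> S" for k
  proof -
    have "dim (a ` (S - {k})) \<le> card (a ` (S - {k}))"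
      using fin by (intro dim_le_card) (auto intro: span_base)
    also have "\<dots> \<le> card (S - {k})" using fin by (simp add: card_image_le)
    also have "\<dots> < CARD('n)" using cS kS fin by (simp add: card_Diff_singleton_if)
    finally have "dim (a ` (S - {k})) < DIM(real^'n)" by simp
    then obtain y where y: "y \<noteq> 0" "\<And>w. w \<in> span (a ` (S - {k})) \<Longrightarrow> orthogonal y w"
      using orthogonal_to_subspace_exists by blast
    have yj: "a j \<bullet> y = 0" if "j \<in> S - {k}" for j
      using y(2)[of "a j"] that by (auto intro: span_base simp: orthogonal_def inner_commute)
    have "a k \<bullet> y \<noteq> 0"
    proof
      assume "a k \<bullet> y = 0"
      then have "\<forall>j\<in>S. a j \<bullet> y = 0" using yj by auto
      then show False using z y(1) by blast
    qed
    then show ?thesis using yj by (intro exI[of _ "(1 / (a k \<bullet> y)) *\<^sub>R y"]) auto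
  qed
  then obtain z where zz: "\<And>k. k \<in> S \<Longrightarrow> a k \<bullet> z k = 1 \<and> (\<forall>j\<in>S - {k}. a j \<bullet> z k = 0)"
    by metis
  define p where "p = (\<Sum>k\<in>S. b k *\<^sub>R z k)"
  have "a j \<bullet> p = b j" if "j \<in> S" for j
  proof -
    have "a j \<bullet> p = (\<Sum>k\<in>S. b k * (a j \<bullet> z k))" by (simp add: p_def inner_sum_right)
    also have "\<dots> = (\<Sum>k\<in>S. if k = j then b k else 0)"
      by (rule sum.cong) (use zz that in auto)
    also have "\<dots> = b j" using fin that by simp
    finally show ?thesis .
  qed
  moreover have "q = p" if "\<forall>k\<in>S. a k \<bullet> q = b k" for q
  proof -
    have "\<forall>k\<in>S. a k \<bullet> (q - p) = 0" using that \<open>\<And>j. j \<in> S \<Longrightarrow> a j \<bullet> p = b j\<close>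
      by (simp add: inner_diff_right)
    then show ?thesis using z by fastforce
  qed
  ultimately show ?thesis by blast
qed



definition GP :: "'k set \<Rightarrow> ('k \<Rightarrow> real^'n) \<Rightarrow> ('k \<Rightarrow> real) \<Rightarrow> bool" where
  "GP I a b \<longleftrightarrow> (\<forall>S\<subseteq>I. card S \<le> CARD('n) \<longrightarrow> inj_on a S \<and> independent (a ` S)) \<and>
     (\<forall>S\<subseteq>I. card S = CARD('n) \<longrightarrow> (\<forall>k\<in>I - S. \<forall>p. (\<forall>j\<in>S. a j \<bullet> p = b j) \<longrightarrow> a k \<bullet> p \<noteq> b k))"

lemma construct:
  fixes A :: "'k \<Rightarrow> real^'n" and B :: "'k \<Rightarrow> real"
  assumes "finite I" "e > 0"
  shows "\<exists>a b. (\<forall>k\<in>I. dist (a k) (A k) < e \<and> \<bar>b k - B k\<bar> < e) \<and> GP I a b"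
  using assms(1)
proof (induction I rule: finite_induct)
  case empty
  show ?case
    by (rule exI[of _ A], rule exI[of _ B]) (auto simp: GP_def dest: independent_empty[THEN notE])
next
  case (insert k0 I)
  from insert.IH obtain a b where close: "\<forall>k\<in>I. dist (a k) (A k) < e \<and> \<bar>b k - B k\<bar> < e"
    and gp: "GP I a b" by blast
  have gpA: "\<And>S. S \<subseteq> I \<Longrightarrow> card S \<le> CARD('n) \<Longrightarrow> inj_on a S \<and> independent (a ` S)"
    and gpB: "\<And>S k p. S \<subseteq> I \<Longrightarrow> card S = CARD('n) \<Longrightarrow> k \<in> I - S \<Longrightarrow> (\<forall>j\<in>S. a j \<bullet> p = b j) \<Longrightarrow> a k \<bullet> p \<noteq> b k"
    using gp unfolding GP_def by blast+
  define F where "F = (\<lambda>T. a ` T) ` {T. T \<subseteq> I \<and> card T < CARD('n)}"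
  have "finite F" using insert.hyps(1) by (simp add: F_def)
  moreover have "\<forall>X\<in>F. dim X < CARD('n)"
  proof
    fix X assume "X \<in> F"
    then obtain T where T: "T \<subseteq> I" "card T < CARD('n)" "X = a ` T" by (auto simp: F_def)
    have "finite T" using T(1) insert.hyps(1) finite_subset by blast
    then have "dim X \<le> card X" using T(3) by (intro dim_le_card) (auto intro: span_base)
    also have "\<dots> \<le> card T" using T(3) \<open>finite T\<close> by (simp add: card_image_le)
    finally show "dim X < CARD('n)" using T(2) by simp
  qed
  ultimately obtain a0 where a0: "dist a0 (A k0) < e" "\<forall>X\<in>F. a0 \<notin> span X"
    using avoid_subspaces assms(2) by blast
  define Pts where "Pts = (\<Union>T\<in>{T. T \<subseteq> I \<and> card T = CARD('n)}. {p. \<forall>j\<in>T. a j \<bullet> p = b j})"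
  have "finite Pts"
    unfolding Pts_def
  proof (rule finite_UN_I)
    show "finite {T. T \<subseteq> I \<and> card T = CARD('n)}" using insert.hyps(1) by simp
    fix T assume "T \<in> {T. T \<subseteq> I \<and> card T = CARD('n)}"
    then have T: "T \<subseteq> I" "card T = CARD('n)" by auto
    have "finite T" using T(1) insert.hyps(1) finite_subset by blast
    from solve[OF this T(2)] gpA[OF T(1)] T(2) obtain p where "\<forall>q. (\<forall>k\<in>T. a k \<bullet> q = b k) \<longleftrightarrow> q = p"
      by (metis order_refl)
    then have "{p. \<forall>j\<in>T. a j \<bullet> p = b j} = {p}" by auto
    then show "finite {p. \<forall>j\<in>T. a j \<bullet> p = b j}" by simp
  qed
  then obtain b0 where b0: "\<bar>b0 - B k0\<bar> < e" "b0 \<notin> (\<lambda>p. a0 \<bullet> p) ` Pts"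
    using avoid_finite_real assms(2) by blast
  define a' where "a' = a(k0 := a0)"
  define b' where "b' = b(k0 := b0)"
  have close': "\<forall>k\<in>insert k0 I. dist (a' k) (A k) < e \<and> \<bar>b' k - B k\<bar> < e"
    using close a0 b0 by (auto simp: a'_def b'_def)
  have A': "inj_on a' S \<and> independent (a' ` S)" if S: "S \<subseteq> insert k0 I" "card S \<le> CARD('n)" for S
  proof (cases "k0 \<in> S")
    case False
    then have "S \<subseteq> I" using S by auto
    moreover have "a' ` S = a ` S" "inj_on a' S = inj_on a S" using False
      by (auto simp: a'_def intro!: inj_on_cong)
    ultimately show ?thesis using gpA S(2) by simp
  next
    case True
    define T where "T = S - {k0}"
    have TI: "T \<subseteq> I" using S insert.hyps(2) by (auto simp: T_def)
    have "finite S" using S(1) insert.hyps(1) finite_subset by blast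
    then have "card S > 0" using True card_gt_0_iff by blast
    then have cT: "card T < CARD('n)" using S(2) True \<open>finite S\<close> by (simp add: T_def card_Diff_singleton_if)
    then have iT: "inj_on a T" "independent (a ` T)" using gpA[OF TI] by auto
    have "a ` T \<in> F" using TI cT by (auto simp: F_def)
    then have a0n: "a0 \<notin> span (a ` T)" using a0(2) by blast
    have ST: "S = insert k0 T" using True by (auto simp: T_def)
    have k0T: "k0 \<notin> T" by (simp add: T_def)
    have imT: "a' ` T = a ` T" using k0T by (auto simp: a'_def)
    have "a' ` S = insert a0 (a ` T)" using ST imT by (simp add: a'_def del: fun_upd_apply) simp
    moreover have "inj_on a' T" using iT(1) k0T by (auto simp: a'_def inj_on_def)
    moreover have "independent (insert a0 (a ` T))"
      using a0n iT(2) by (rule real_vector.independent_insertI)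
    moreover have "a0 \<notin> a ` T" using a0n span_base by blast
    moreover have "a' k0 = a0" by (simp add: a'_def)
    ultimately show ?thesis using ST imT k0T by (simp add: inj_on_insert)
  qed
  have B': "a' k \<bullet> p \<noteq> b' k"
    if S: "S \<subseteq> insert k0 I" "card S = CARD('n)" and k: "k \<in> insert k0 I - S"
      and p: "\<forall>j\<in>S. a' j \<bullet> p = b' j" for S k p
  proof (cases "k0 \<in> S")
    case False
    then have SI: "S \<subseteq> I" using S by auto
    have pS: "\<forall>j\<in>S. a j \<bullet> p = b j" using p False by (auto simp: a'_def b'_def split: if_splits)
    then have "p \<in> Pts" using SI S(2) by (auto simp: Pts_def)
    show ?thesis
    proof (cases "k = k0")
      case True
      then show ?thesis using b0(2) \<open>p \<in> Pts\<close> by (auto simp: a'_def b'_def)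
    next
      case False
      then have "k \<in> I - S" using k by auto
      then show ?thesis using gpB[OF SI S(2) _ pS] False by (simp add: a'_def b'_def)
    qed
  next
    case True
    then have kk: "k \<noteq> k0" "k \<in> I" "k \<notin> S" using k by auto
    show ?thesis
    proof
      assume ak: "a' k \<bullet> p = b' k"
      define T where "T = insert k (S - {k0})"
      have TI: "T \<subseteq> I" using S kk insert.hyps(2) by (auto simp: T_def)
      have "finite S" using S(1) insert.hyps(1) finite_subset by blast
      then have cT: "card T = CARD('n)" using S(2) True kk by (simp add: T_def card_Diff_singleton_if)
      have "\<forall>j\<in>T. a j \<bullet> p = b j" using p ak kk insert.hyps(2) TI
        by (auto simp: T_def a'_def b'_def split: if_splits)
      then have "p \<in> Pts" using TI cT by (auto simp: Pts_def)
      moreover have "a0 \<bullet> p = b0" using p True by (auto simp: a'_def b'_def)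
      ultimately show False using b0(2) by auto
    qed
  qed
  have "GP (insert k0 I) a' b'" unfolding GP_def using A' B' by blast
  with close' show ?case by blast
qed



lemma GP_gp:
  fixes a :: "'k \<Rightarrow> real^'n"
  assumes fin: "finite I" and gp: "GP I a b"
    and inj: "inj_on (\<lambda>k. {x. a k \<bullet> x = b k}) I" and cI: "card I \<ge> CARD('n)"
  shows "general_position ((\<lambda>k. {x. a k \<bullet> x = b k}) ` I)"
proof -
  define h where "h = (\<lambda>k. {x. a k \<bullet> x = b k})"
  have gpA: "\<And>S. S \<subseteq> I \<Longrightarrow> card S \<le> CARD('n) \<Longrightarrow> inj_on a S \<and> independent (a ` S)"
    and gpB: "\<And>S k p. S \<subseteq> I \<Longrightarrow> card S = CARD('n) \<Longrightarrow> k \<in> I - S \<Longrightarrow> (\<forall>j\<in>S. a j \<bullet> p = b j) \<Longrightarrow> a k \<bullet> p \<noteq> b k"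
    using gp unfolding GP_def by blast+
  have injh: "inj_on h I" using inj by (simp add: h_def)
  have inter: "\<Inter>(h ` S) = {p. \<forall>k\<in>S. a k \<bullet> p = b k}" for S by (auto simp: h_def)
  have uniq: "\<exists>!p. \<forall>k\<in>S. a k \<bullet> p = b k" if "S \<subseteq> I" "card S = CARD('n)" for S
    using solve[of S a b] gpA[of S] that fin finite_subset by auto
  have pre: "\<exists>S\<subseteq>I. S' = h ` S \<and> card S = CARD('n)" if "S' \<subseteq> h ` I" "card S' = CARD('n)" for S'
  proof -
    from that(1) obtain S where S: "S \<subseteq> I" "S' = h ` S" by (auto simp: subset_image_iff)
    have "card S' = card S" using S injh by (metis card_image inj_on_subset)
    with S that(2) show ?thesis by auto
  qed
  have hyp: "is_hyperplane (h k)" if "k \<in> I" for k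
  proof -
    have "card {k} \<le> CARD('n)" by simp
    then have "independent (a ` {k})" using gpA[of "{k}"] that by auto
    then have "a k \<noteq> 0" using real_vector.dependent_zero by force
    then show ?thesis unfolding is_hyperplane_def h_def by blast
  qed
  have P3: "\<exists>!p. p \<in> \<Inter>S'" if "S' \<subseteq> h ` I" "card S' = CARD('n)" for S'
  proof -
    from pre[OF that] obtain S where S: "S \<subseteq> I" "S' = h ` S" "card S = CARD('n)" by blast
    then show ?thesis using uniq[OF S(1) S(3)] inter by auto
  qed
  have P4: "\<Inter>S' \<noteq> \<Inter>T'" if "S' \<subseteq> h ` I" "card S' = CARD('n)" "T' \<subseteq> h ` I" "card T' = CARD('n)" "S' \<noteq> T'"
    for S' T'
  proof
    assume eq: "\<Inter>S' = \<Inter>T'"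
    from pre[OF that(1,2)] obtain S where S: "S \<subseteq> I" "S' = h ` S" "card S = CARD('n)" by blast
    from pre[OF that(3,4)] obtain T where T: "T \<subseteq> I" "T' = h ` T" "card T = CARD('n)" by blast
    have "S \<noteq> T" using S T that(5) by auto
    have "\<not> T \<subseteq> S"
    proof
      assume "T \<subseteq> S"
      then have "T = S" using card_subset_eq[of S T] S T fin finite_subset by metis
      with \<open>S \<noteq> T\<close> show False by simp
    qed
    then obtain k where k: "k \<in> T" "k \<notin> S" by blast
    from uniq[OF S(1) S(3)] obtain p where p: "\<forall>j\<in>S. a j \<bullet> p = b j" by blast
    then have "p \<in> \<Inter>T'" using eq S(2) inter by auto
    then have "a k \<bullet> p = b k" using T(2) inter k(1) by auto
    moreover have "a k \<bullet> p \<noteq> b k" using gpB[OF S(1) S(3) _ p] k T(1) by auto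
    ultimately show False by simp
  qed
  have "card (h ` I) = card I" using injh by (simp add: card_image)
  then show ?thesis unfolding general_position_def h_def[symmetric]
    using fin cI hyp P3 P4 by auto
qed

lemma card_sign_vectors: "finite (sign_vectors :: (real^'n) set) \<and> card (sign_vectors :: (real^'n) set) = 2 ^ CARD('n)"
proof -
  define f :: "'n set \<Rightarrow> real^'n" where "f = (\<lambda>S. \<chi> i. if i \<in> S then 1 else -1)"
  have im: "sign_vectors = f ` Pow UNIV"
  proof (rule set_eqI, rule iffI)
    fix x :: "real^'n" assume "x \<in> sign_vectors"
    then have "x = f {i. x $ i = 1}" by (auto simp: sign_vectors_def f_def vec_eq_iff)
    then show "x \<in> f ` Pow UNIV" by blast
  next
    fix x assume "x \<in> f ` Pow UNIV" then show "x \<in> sign_vectors"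
      by (auto simp: sign_vectors_def f_def split: if_splits)
  qed
  have "inj_on f (Pow UNIV)"
  proof (rule inj_onI)
    fix S T assume "f S = f T"
    then have "\<forall>i. (if i \<in> S then 1 else -1 :: real) = (if i \<in> T then 1 else -1)"
      by (auto simp: f_def vec_eq_iff)
    then show "S = T" by (metis (full_types) one_neq_neg_one subsetI subset_antisym)
  qed
  then have "card (f ` Pow UNIV) = card (Pow (UNIV :: 'n set))" by (rule card_image)
  also have "\<dots> = 2 ^ CARD('n)" by (rule card_Pow[OF finite])
  finally show ?thesis using im by (metis finite finite_imageI)
qed



lemma arithA:
  fixes e k u1 v1 u2 v2 :: real
  assumes "0 < e" "e \<le> 1/4" "\<bar>u1\<bar> < e" "\<bar>v1\<bar> > 1 - e" "v1 = k * u1"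
    "\<bar>u2\<bar> > 1 - e" "\<bar>v2\<bar> < 1 + e" "v2 = k * u2"
  shows False
proof -
  have "\<bar>v1\<bar> = \<bar>k\<bar> * \<bar>u1\<bar>" using assms(5) by (simp add: abs_mult)
  also have "\<dots> \<le> \<bar>k\<bar> * e" using assms(3) by (intro mult_left_mono) auto
  finally have "\<bar>k\<bar> * e > 3/4" using assms(2,4) by linarith
  moreover have "\<bar>k\<bar> * e \<le> \<bar>k\<bar> * (1/4)" using assms(2) by (intro mult_left_mono) auto
  ultimately have k3: "\<bar>k\<bar> > 3" by linarith
  have "\<bar>v2\<bar> = \<bar>k\<bar> * \<bar>u2\<bar>" using assms(8) by (simp add: abs_mult)
  also have "\<dots> \<ge> \<bar>k\<bar> * (3/4)" using assms(2,6) by (intro mult_left_mono) auto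
  finally show False using k3 assms(2,7) by linarith
qed

lemma arithB:
  fixes e k u v s :: real
  assumes "e \<le> 1/4" "k > 0" "v = k * u" "\<bar>u - s\<bar> < e" "\<bar>v + s\<bar> < e" "s = 1 \<or> s = -1"
  shows False
  using assms(6)
proof
  assume "s = 1"
  then have "u > 0" "v < 0" using assms by auto
  moreover have "k * u > 0" using assms(2) \<open>u > 0\<close> by (rule mult_pos_pos)
  ultimately show False using assms(3) by simp
next
  assume "s = -1"
  then have "u < 0" "v > 0" using assms by auto
  moreover have "k * u < 0" using assms(2) \<open>u < 0\<close> by (rule mult_pos_neg)
  ultimately show False using assms(3) by simp
qed

lemma comp_close:
  fixes v w :: "real^'n"
  assumes "norm (v - w) < e"
  shows "\<bar>v $ j - w $ j\<bar> < e"
  using component_le_norm_cart[of "v - w" j] assms by simp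

lemma close_card:
  fixes ac :: "'n \<Rightarrow> real^'n" and bc :: "'n \<Rightarrow> real"
    and as :: "real^'n \<Rightarrow> real^'n" and bs :: "real^'n \<Rightarrow> real"
  assumes d2: "CARD('n) \<ge> 2" and e: "0 < e" "e \<le> 1/4"
    and C1: "\<forall>i. norm (ac i - axis i 1) < e \<and> \<bar>bc i\<bar> < e"
    and C2: "\<forall>\<delta>\<in>sign_vectors. norm (as \<delta> - \<delta>) < e \<and> \<bar>bs \<delta> - 1\<bar> < e"
  shows "card ((\<lambda>i. {x. ac i \<bullet> x = bc i}) ` UNIV \<union> (\<lambda>\<delta>. {x. as \<delta> \<bullet> x = bs \<delta>}) ` sign_vectors)
           = 2 ^ CARD('n) + CARD('n)"
proof -
  have cC: "\<bar>ac i $ j - (if j = i then 1 else 0)\<bar> < e" for i j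
    using comp_close[of "ac i" "axis i 1" e j] C1 by (simp add: axis_def)
  have cS: "\<bar>as \<delta> $ j - \<delta> $ j\<bar> < e" "\<delta> $ j = 1 \<or> \<delta> $ j = -1" if "\<delta> \<in> sign_vectors" for \<delta> j
    using comp_close[of "as \<delta>" \<delta> e j] C2 that by (auto simp: sign_vectors_def)
  have cS': "\<bar>as \<delta> $ j\<bar> > 1 - e" "\<bar>as \<delta> $ j\<bar> < 1 + e" if "\<delta> \<in> sign_vectors" for \<delta> j
    using cS[OF that, of j] by auto
  have bS: "bs \<delta> > 0" if "\<delta> \<in> sign_vectors" for \<delta>
  proof -
    have "\<bar>bs \<delta> - 1\<bar> < e" using C2 that by blast
    then show ?thesis using e by linarith
  qed
  have acnz: "ac i \<noteq> 0" for i using cC[of i i] e by auto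
  have asnz: "as \<delta> \<noteq> 0" if "\<delta> \<in> sign_vectors" for \<delta>
  proof
    assume "as \<delta> = 0"
    then show False using cS'[OF that, of undefined] e by simp
  qed
  have other: "\<exists>j. j \<noteq> i" for i :: 'n
  proof (rule ccontr)
    assume "\<not> ?thesis"
    then have "UNIV = {i}" by auto
    then have "CARD('n) = 1" by (metis card.empty card.insert empty_iff finite.emptyI One_nat_def)
    then show False using d2 by simp
  qed
  have injC: "inj (\<lambda>i. {x. ac i \<bullet> x = bc i})"
  proof (rule injI)
    fix i j assume eq: "{x. ac i \<bullet> x = bc i} = {x. ac j \<bullet> x = bc j}"
    show "i = j"
    proof (rule ccontr)
      assume ij: "i \<noteq> j"
      obtain k where k: "ac j = k *\<^sub>R ac i" using hyp_prop[OF acnz eq] by blast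
      show False
      proof (rule arithA[OF e, of "ac i $ j" "ac j $ j" k "ac i $ i" "ac j $ i"])
        show "\<bar>ac i $ j\<bar> < e" using cC[of i j] ij by auto
        show "\<bar>ac j $ j\<bar> > 1 - e" using cC[of j j] by auto
        show "\<bar>ac i $ i\<bar> > 1 - e" using cC[of i i] by auto
        show "\<bar>ac j $ i\<bar> < 1 + e" using cC[of j i] ij by auto
      qed (use k in auto)
    qed
  qed
  have injS: "inj_on (\<lambda>\<delta>. {x. as \<delta> \<bullet> x = bs \<delta>}) sign_vectors"
  proof (rule inj_onI)
    fix \<delta>1 \<delta>2 assume d1: "\<delta>1 \<in> sign_vectors" and d2': "\<delta>2 \<in> sign_vectors"
      and eq: "{x. as \<delta>1 \<bullet> x = bs \<delta>1} = {x. as \<delta>2 \<bullet> x = bs \<delta>2}"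
    show "\<delta>1 = \<delta>2"
    proof (rule ccontr)
      assume ne: "\<delta>1 \<noteq> \<delta>2"
      obtain k where k: "as \<delta>2 = k *\<^sub>R as \<delta>1" "bs \<delta>2 = k * bs \<delta>1"
        using hyp_prop[OF asnz[OF d1] eq] by blast
      have kpos: "k > 0"
      proof (rule ccontr)
        assume "\<not> k > 0"
        then have "k * bs \<delta>1 \<le> 0" using bS[OF d1] by (simp add: mult_nonpos_nonneg)
        then show False using k(2) bS[OF d2'] by simp
      qed
      from ne obtain j where j: "\<delta>1 $ j \<noteq> \<delta>2 $ j" by (auto simp: vec_eq_iff)
      have "\<delta>2 $ j = - (\<delta>1 $ j)" using j cS(2)[OF d1, of j] cS(2)[OF d2', of j] by auto
      then show False
        using arithB[OF e(2) kpos, of "as \<delta>2 $ j" "as \<delta>1 $ j" "\<delta>1 $ j"] k(1)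
          cS[OF d1, of j] cS[OF d2', of j] by auto
    qed
  qed
  have disj: "(\<lambda>i. {x. ac i \<bullet> x = bc i}) ` UNIV \<inter> (\<lambda>\<delta>. {x. as \<delta> \<bullet> x = bs \<delta>}) ` sign_vectors = {}"
  proof (rule ccontr)
    assume "\<not> ?thesis"
    then obtain i \<delta> where d: "\<delta> \<in> sign_vectors" and eq: "{x. ac i \<bullet> x = bc i} = {x. as \<delta> \<bullet> x = bs \<delta>}"
      by auto
    obtain k where k: "as \<delta> = k *\<^sub>R ac i" using hyp_prop[OF acnz eq] by blast
    obtain j where ij: "j \<noteq> i" using other by blast
    show False
    proof (rule arithA[OF e, of "ac i $ j" "as \<delta> $ j" k "ac i $ i" "as \<delta> $ i"])
      show "\<bar>ac i $ j\<bar> < e" using cC[of i j] ij by auto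
      show "\<bar>as \<delta> $ j\<bar> > 1 - e" using cS'[OF d] by auto
      show "\<bar>ac i $ i\<bar> > 1 - e" using cC[of i i] by auto
      show "\<bar>as \<delta> $ i\<bar> < 1 + e" using cS'[OF d] by auto
    qed (use k in auto)
  qed
  have fS: "finite (sign_vectors :: (real^'n) set)" using card_sign_vectors[where 'n='n] by blast
  have "card ((\<lambda>i. {x. ac i \<bullet> x = bc i}) ` UNIV \<union> (\<lambda>\<delta>. {x. as \<delta> \<bullet> x = bs \<delta>}) ` sign_vectors)
     = card ((\<lambda>i. {x. ac i \<bullet> x = bc i}) ` UNIV) + card ((\<lambda>\<delta>. {x. as \<delta> \<bullet> x = bs \<delta>}) ` sign_vectors)"
    using disj fS by (intro card_Un_disjoint) auto
  also have "\<dots> = CARD('n) + card (sign_vectors :: (real^'n) set)"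
    using injC injS by (simp add: card_image)
  finally show ?thesis using card_sign_vectors[where 'n='n] by simp
qed



lemma estimate:
  fixes ac :: "'n \<Rightarrow> real^'n" and bc :: "'n \<Rightarrow> real" and x :: "real^'n"
    and \<sigma> :: "'n \<Rightarrow> real" and as :: "real^'n" and bs :: real
  assumes e: "0 < e" "(2 * real CARD('n) + 1) * e \<le> 1/2"
    and C1: "\<forall>i. norm (ac i - axis i 1) < e \<and> \<bar>bc i\<bar> < e"
    and sg: "\<forall>i. \<sigma> i = 1 \<or> \<sigma> i = -1"
    and side: "\<forall>i. \<sigma> i * (ac i \<bullet> x - bc i) \<ge> 0"
    and C2: "norm (as - (\<chi> i. - \<sigma> i)) < e" "\<bar>bs - 1\<bar> < e"
    and on: "as \<bullet> x = bs"
  shows False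
proof -
  define M where "M = norm x"
  define c where "c = e * M + e"
  define y where "y = (\<lambda>i. \<sigma> i * x $ i)"
  define \<delta> :: "real^'n" where "\<delta> = (\<chi> i. - \<sigma> i)"
  have M0: "M \<ge> 0" by (simp add: M_def)
  have CS: "\<bar>v \<bullet> x\<bar> \<le> e * M" if "norm v < e" for v
  proof -
    have "\<bar>v \<bullet> x\<bar> \<le> norm v * norm x" by (rule Cauchy_Schwarz_ineq2)
    also have "\<dots> \<le> e * M" using that M0 by (simp add: M_def mult_right_mono)
    finally show ?thesis .
  qed
  have yi: "y i \<ge> - c" for i
  proof -
    have eq: "ac i \<bullet> x = x $ i + (ac i - axis i 1) \<bullet> x"
      by (simp add: inner_diff_left inner_axis')
    have b1: "\<bar>(ac i - axis i 1) \<bullet> x\<bar> \<le> e * M" using CS C1 by blast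
    have b2: "\<bar>bc i\<bar> < e" using C1 by blast
    from sg[rule_format, of i] show ?thesis
    proof
      assume s: "\<sigma> i = 1"
      then have "ac i \<bullet> x - bc i \<ge> 0" using side[rule_format, of i] by simp
      then show ?thesis using eq b1 b2 s by (simp add: y_def c_def; linarith)
    next
      assume s: "\<sigma> i = -1"
      then have "ac i \<bullet> x - bc i \<le> 0" using side[rule_format, of i] by simp
      then show ?thesis using eq b1 b2 s by (simp add: y_def c_def; linarith)
    qed
  qed
  have dx: "\<delta> \<bullet> x = - (\<Sum>i\<in>UNIV. y i)"
    by (simp add: \<delta>_def y_def inner_vec_def sum_negf)
  have "as \<bullet> x = \<delta> \<bullet> x + (as - \<delta>) \<bullet> x" by (simp add: inner_diff_left)
  moreover have "\<bar>(as - \<delta>) \<bullet> x\<bar> \<le> e * M" using CS C2(1) by (simp add: \<delta>_def)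
  ultimately have sy: "(\<Sum>i\<in>UNIV. y i) \<le> c - 1" using on C2(2) dx by (simp add: c_def; linarith)
  have ay: "\<bar>y i\<bar> \<le> y i + 2 * c" for i
  proof -
    have "c \<ge> 0" using e(1) M0 by (simp add: c_def)
    then show ?thesis using yi[of i] by (simp add: abs_if)
  qed
  have "M \<le> (\<Sum>i\<in>UNIV. \<bar>x $ i\<bar>)" by (simp add: M_def norm_le_l1_cart)
  also have "\<dots> = (\<Sum>i\<in>UNIV. \<bar>y i\<bar>)"
  proof (rule sum.cong)
    fix i show "\<bar>x $ i\<bar> = \<bar>y i\<bar>" using sg[rule_format, of i] by (auto simp: y_def abs_mult)
  qed simp
  also have "\<dots> \<le> (\<Sum>i\<in>UNIV. y i + 2 * c)" by (rule sum_mono) (rule ay)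
  also have "\<dots> = (\<Sum>i\<in>UNIV. y i) + real CARD('n) * (2 * c)" by (simp add: sum.distrib)
  also have "\<dots> \<le> (2 * real CARD('n) + 1) * e * (M + 1) - 1"
    using sy by (simp add: c_def algebra_simps)
  also have "\<dots> \<le> 1/2 * (M + 1) - 1"
  proof -
    have "(2 * real CARD('n) + 1) * e * (M + 1) \<le> 1/2 * (M + 1)"
      using e(2) M0 by (intro mult_right_mono) auto
    then show ?thesis by linarith
  qed
  finally show False using M0 by (simp add: field_simps)
qed

lemma nonconvex:
  fixes ac :: "'n \<Rightarrow> real^'n" and bc :: "'n \<Rightarrow> real"
    and as :: "real^'n \<Rightarrow> real^'n" and bs :: "real^'n \<Rightarrow> real"
  assumes d2: "CARD('n) \<ge> 2" and e: "0 < e" "(2 * real CARD('n) + 1) * e \<le> 1/2"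
    and C1: "\<forall>i. norm (ac i - axis i 1) < e \<and> \<bar>bc i\<bar> < e"
    and C2: "\<forall>\<delta>\<in>sign_vectors. norm (as \<delta> - \<delta>) < e \<and> \<bar>bs \<delta> - 1\<bar> < e"
  shows "\<not> convex_position ((\<lambda>i. {x. ac i \<bullet> x = bc i}) ` UNIV \<union> (\<lambda>\<delta>. {x. as \<delta> \<bullet> x = bs \<delta>}) ` sign_vectors)"
proof
  assume "convex_position ((\<lambda>i. {x. ac i \<bullet> x = bc i}) ` UNIV \<union> (\<lambda>\<delta>. {x. as \<delta> \<bullet> x = bs \<delta>}) ` sign_vectors)"
  then obtain P where P: "polytope P" "aff_dim P = int CARD('n)"
    and F1: "\<And>i. ({x. ac i \<bullet> x = bc i} \<inter> P) facet_of P"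
    and F2: "\<And>\<delta>. \<delta> \<in> sign_vectors \<Longrightarrow> ({x. as \<delta> \<bullet> x = bs \<delta>} \<inter> P) facet_of P"
    unfolding convex_position_def by blast
  have cP: "convex P" using P(1) by (rule polytope_imp_convex)
  have sides: "(\<forall>x\<in>P. ac i \<bullet> x \<le> bc i) \<or> (\<forall>x\<in>P. ac i \<bullet> x \<ge> bc i)" for i
    using side[OF cP] F1[of i] by (simp add: facet_of_def)
  define \<sigma> where "\<sigma> = (\<lambda>i. if (\<forall>x\<in>P. ac i \<bullet> x \<ge> bc i) then 1 else (-1::real))"
  have sg: "\<forall>i. \<sigma> i = 1 \<or> \<sigma> i = -1" by (simp add: \<sigma>_def)
  have sd: "\<forall>i. \<sigma> i * (ac i \<bullet> x - bc i) \<ge> 0" if "x \<in> P" for x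
  proof
    fix i
    show "\<sigma> i * (ac i \<bullet> x - bc i) \<ge> 0"
    proof (cases "\<forall>x\<in>P. ac i \<bullet> x \<ge> bc i")
      case True then show ?thesis using that by (simp add: \<sigma>_def)
    next
      case False
      then have "ac i \<bullet> x \<le> bc i" using sides[of i] that by auto
      moreover have "\<sigma> i = -1" using False unfolding \<sigma>_def by (simp only: if_False)
      ultimately show ?thesis by simp
    qed
  qed
  define \<delta> :: "real^'n" where "\<delta> = (\<chi> i. - \<sigma> i)"
  have dS: "\<delta> \<in> sign_vectors" using sg by (auto simp: sign_vectors_def \<delta>_def)
  have "aff_dim ({x. as \<delta> \<bullet> x = bs \<delta>} \<inter> P) = aff_dim P - 1"
    using F2[OF dS] by (simp add: facet_of_def)
  then have "{x. as \<delta> \<bullet> x = bs \<delta>} \<inter> P \<noteq> {}" using P(2) d2 by auto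
  then obtain x where x: "x \<in> P" "as \<delta> \<bullet> x = bs \<delta>" by blast
  show False
  proof (rule estimate[OF e C1 sg sd[OF x(1)] _ _ x(2)])
    show "norm (as \<delta> - (\<chi> i. - \<sigma> i)) < e" using C2 dS by (simp add: \<delta>_def)
    show "\<bar>bs \<delta> - 1\<bar> < e" using C2 dS by blast
  qed
qed



theorem mainTheorem11:
  assumes "CARD('n::finite) \<ge> 2"
  shows "(\<exists>H :: (real^'n) set set.
            card H = 2 ^ CARD('n) + CARD('n) \<and> general_position H \<and> \<not> convex_position H)
       \<and> (\<exists>\<epsilon>>0. \<forall>(ac :: 'n \<Rightarrow> real^'n) (bc :: 'n \<Rightarrow> real)
                     (as :: real^'n \<Rightarrow> real^'n) (bs :: real^'n \<Rightarrow> real).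
              (\<forall>i. norm (ac i - axis i 1) < \<epsilon> \<and> \<bar>bc i\<bar> < \<epsilon>) \<and>
              (\<forall>\<delta>\<in>sign_vectors. norm (as \<delta> - \<delta>) < \<epsilon> \<and> \<bar>bs \<delta> - 1\<bar> < \<epsilon>) \<and>
              general_position ((\<lambda>i. {x. ac i \<bullet> x = bc i}) ` UNIV \<union>
                                (\<lambda>\<delta>. {x. as \<delta> \<bullet> x = bs \<delta>}) ` sign_vectors)
              \<longrightarrow> card ((\<lambda>i. {x. ac i \<bullet> x = bc i}) ` UNIV \<union>
                        (\<lambda>\<delta>. {x. as \<delta> \<bullet> x = bs \<delta>}) ` sign_vectors) = 2 ^ CARD('n) + CARD('n)
                \<and> \<not> convex_position ((\<lambda>i. {x. ac i \<bullet> x = bc i}) ` UNIV \<union>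
                                (\<lambda>\<delta>. {x. as \<delta> \<bullet> x = bs \<delta>}) ` sign_vectors))"
proof -
  define d where "d = real CARD('n)"
  have d2: "d \<ge> 2" using assms by (simp add: d_def)
  define e where "e = 1 / (4 * d + 2)"
  have e0: "0 < e" using d2 by (simp add: e_def)
  have e4: "e \<le> 1/4" using d2 by (simp add: e_def field_simps)
  have e2: "(2 * real CARD('n) + 1) * e \<le> 1/2" using d2 by (simp add: e_def d_def[symmetric] field_simps)
  have part2: "card ((\<lambda>i. {x. ac i \<bullet> x = bc i}) ` UNIV \<union>
                        (\<lambda>\<delta>. {x. as \<delta> \<bullet> x = bs \<delta>}) ` sign_vectors) = 2 ^ CARD('n) + CARD('n)
                \<and> \<not> convex_position ((\<lambda>i. {x. ac i \<bullet> x = bc i}) ` UNIV \<union>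
                                (\<lambda>\<delta>. {x. as \<delta> \<bullet> x = bs \<delta>}) ` sign_vectors)"
    if C1: "\<forall>i. norm (ac i - axis i 1) < e \<and> \<bar>bc i\<bar> < e"
      and C2: "\<forall>\<delta>\<in>sign_vectors. norm (as \<delta> - \<delta>) < e \<and> \<bar>bs \<delta> - 1\<bar> < e"
    for ac :: "'n \<Rightarrow> real^'n" and bc and as :: "real^'n \<Rightarrow> real^'n" and bs
    using close_card[OF assms e0 e4 C1 C2] nonconvex[OF assms e0 e2 C1 C2] by blast
  define I :: "('n + real^'n) set" where "I = range Inl \<union> Inr ` sign_vectors"
  have fS: "finite (sign_vectors :: (real^'n) set)" and cS: "card (sign_vectors :: (real^'n) set) = 2 ^ CARD('n)"
    using card_sign_vectors[where 'n='n] by auto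
  have finI: "finite I" using fS by (simp add: I_def)
  have cardI: "card I = CARD('n) + 2 ^ CARD('n)"
  proof -
    have "card I = card (range (Inl :: 'n \<Rightarrow> 'n + real^'n)) + card (Inr ` sign_vectors :: ('n + real^'n) set)"
      unfolding I_def using fS by (intro card_Un_disjoint) auto
    also have "\<dots> = CARD('n) + 2 ^ CARD('n)" using cS by (simp add: card_image)
    finally show ?thesis .
  qed
  define A :: "'n + real^'n \<Rightarrow> real^'n" where "A = case_sum (\<lambda>i. axis i 1) (\<lambda>\<delta>. \<delta>)"
  define B :: "'n + real^'n \<Rightarrow> real" where "B = case_sum (\<lambda>i. 0) (\<lambda>\<delta>. 1)"
  obtain a b where close: "\<forall>k\<in>I. dist (a k) (A k) < e \<and> \<bar>b k - B k\<bar> < e" and gp: "GP I a b"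
    using construct[OF finI e0, of A B] by blast
  define ac where "ac = (\<lambda>i. a (Inl i))"
  define bc where "bc = (\<lambda>i. b (Inl i))"
  define as where "as = (\<lambda>\<delta>. a (Inr \<delta>))"
  define bs where "bs = (\<lambda>\<delta>. b (Inr \<delta>))"
  have C1: "\<forall>i. norm (ac i - axis i 1) < e \<and> \<bar>bc i\<bar> < e"
  proof
    fix i
    have "Inl i \<in> I" by (simp add: I_def)
    then show "norm (ac i - axis i 1) < e \<and> \<bar>bc i\<bar> < e"
      using close by (auto simp: ac_def bc_def A_def B_def dist_norm)
  qed
  have C2: "\<forall>\<delta>\<in>sign_vectors. norm (as \<delta> - \<delta>) < e \<and> \<bar>bs \<delta> - 1\<bar> < e"
  proof
    fix \<delta> :: "real^'n" assume "\<delta> \<in> sign_vectors"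
    then have "Inr \<delta> \<in> I" by (simp add: I_def)
    then show "norm (as \<delta> - \<delta>) < e \<and> \<bar>bs \<delta> - 1\<bar> < e"
      using close by (auto simp: as_def bs_def A_def B_def dist_norm)
  qed
  define h where "h = (\<lambda>k. {x. a k \<bullet> x = b k})"
  have Heq: "(\<lambda>i. {x. ac i \<bullet> x = bc i}) ` UNIV \<union> (\<lambda>\<delta>. {x. as \<delta> \<bullet> x = bs \<delta>}) ` sign_vectors = h ` I"
    by (simp add: I_def h_def ac_def bc_def as_def bs_def image_Un image_image)
  have p2: "card (h ` I) = 2 ^ CARD('n) + CARD('n) \<and> \<not> convex_position (h ` I)"
    using part2[OF C1 C2] Heq by simp
  then have "inj_on h I" using cardI finI by (simp add: inj_on_iff_eq_card)
  then have "general_position (h ` I)" unfolding h_def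
    using GP_gp[OF finI gp] cardI by simp
  with p2 have part1: "\<exists>H :: (real^'n) set set.
            card H = 2 ^ CARD('n) + CARD('n) \<and> general_position H \<and> \<not> convex_position H" by blast
  show ?thesis using part1 part2 e0 by blast
qed


end
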